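(* There do not exist a Luzin set $L\subseteq\mathbb{R}$ and a Sierpiński set $S\subseteq\mathbb{R}$ such that $L+S=\{l+s:l\in L,s\in S\}$ is a Bernstein set.
   Context: A Luzin set is $L\subseteq\mathbb{R}$ with $|L|=\mathfrak{c}$ such that $L\cap M$ is countable for every meager $M$. A Sierpiński set is $S\subseteq\mathbb{R}$ with $|S|=\mathfrak{c}$ such that $S\cap N$ is countable for every Lebesgue-null $N$. A set $B\subseteq\mathbb{R}$ is a Bernstein set if for every nonempty perfect set $P\subseteq\mathbb{R}$ both $B\cap P\neq\emptyset$ and $(\mathbb{R}\setminus B)\cap P\neq\emptyset$. *)

theory Defs
  imports "HOL-Analysis.Analysis" "HOL-Library.Equipollence"
begin

definition nowhere_dense :: "real set \<Rightarrow> bool" where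
  "nowhere_dense A \<longleftrightarrow> interior (closure A) = {}"

definition meager :: "real set \<Rightarrow> bool" where
  "meager M \<longleftrightarrow> (\<exists>\<F>. countable \<F> \<and> (\<forall>A\<in>\<F>. nowhere_dense A) \<and> M \<subseteq> \<Union>\<F>)"

definition lebesgue_null :: "real set \<Rightarrow> bool" where
  "lebesgue_null N \<longleftrightarrow> N \<in> null_sets lebesgue"

definition perfect_set :: "real set \<Rightarrow> bool" where
  "perfect_set P \<longleftrightarrow> closed P \<and> (\<forall>x\<in>P. x islimpt P)"

definition luzin_set :: "real set \<Rightarrow> bool" where
  "luzin_set L \<longleftrightarrow> L \<approx> (UNIV :: real set) \<and> (\<forall>M. meager M \<longrightarrow> countable (L \<inter> M))"

definition sierpinski_set :: "real set \<Rightarrow> bool" where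
  "sierpinski_set S \<longleftrightarrow> S \<approx> (UNIV :: real set) \<and> (\<forall>N. lebesgue_null N \<longrightarrow> countable (S \<inter> N))"

definition bernstein_set :: "real set \<Rightarrow> bool" where
  "bernstein_set B \<longleftrightarrow> (\<forall>P. P \<noteq> {} \<and> perfect_set P \<longrightarrow> B \<inter> P \<noteq> {} \<and> (UNIV - B) \<inter> P \<noteq> {})"

end

theory Submission
  imports Defs
begin


definition w :: "nat \<Rightarrow> real" where "w k = (1/4)^Suc k"
definition fa :: "(nat \<Rightarrow> bool) \<Rightarrow> nat \<Rightarrow> real" where "fa a k = (if a k then w k else 0)"
definition phi :: "(nat \<Rightarrow> bool) \<Rightarrow> real" where "phi a = (\<Sum>k. fa a k)"
definition Sm :: "nat \<Rightarrow> (nat \<Rightarrow> bool) \<Rightarrow> real" where "Sm m a = (\<Sum>k<m. fa a k)"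

lemma summable_w: "summable w"
proof -
  have "summable (\<lambda>k. (1/4) * (1/4::real)^k)" by (intro summable_mult summable_geometric) simp
  then show ?thesis unfolding w_def by simp
qed

lemma fa_nonneg: "0 \<le> fa a k" and fa_le: "fa a k \<le> w k"
  by (auto simp: fa_def w_def)

lemma summable_fa: "summable (fa a)"
  by (rule summable_comparison_test'[OF summable_w, of 0]) (auto simp: fa_def w_def)

lemma w_tail: "(\<Sum>n. w (n + m)) = (1/4)^m / 3"
proof -
  have "(\<lambda>n. w (n + m)) = (\<lambda>n. ((1/4)^Suc m) * (1/4)^n)"
    by (auto simp: w_def power_add[symmetric] add.commute)
  moreover have "(\<Sum>n. ((1/4)^Suc m) * ((1/4::real))^n) = ((1/4)^Suc m) * (1 / (1 - 1/4))"
    by (subst suminf_mult) (auto simp: suminf_geometric)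
  ultimately show ?thesis by simp
qed

lemma tail_bound: "0 \<le> phi a - Sm m a \<and> phi a - Sm m a \<le> (1/4)^m / 3"
proof -
  have s: "summable (\<lambda>n. fa a (n + m))" using summable_fa by (simp add: summable_iff_shift)
  have sw: "summable (\<lambda>n. w (n + m))" using summable_w by (simp add: summable_iff_shift)
  have e: "phi a = (\<Sum>n. fa a (n + m)) + Sm m a"
    unfolding phi_def Sm_def by (rule suminf_split_initial_segment[OF summable_fa])
  have "0 \<le> (\<Sum>n. fa a (n + m))" using s by (intro suminf_nonneg) (auto simp: fa_nonneg)
  moreover have "(\<Sum>n. fa a (n + m)) \<le> (\<Sum>n. w (n + m))"
    using s sw by (intro suminf_le) (auto simp: fa_le)
  ultimately show ?thesis using e w_tail by simp
qed

lemma cont_phi: "continuous_on UNIV phi"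
proof -
  have ul: "uniform_limit UNIV (\<lambda>n a. \<Sum>i<n. fa a i) phi sequentially"
    unfolding phi_def
    by (rule Weierstrass_m_test[OF _ summable_w]) (auto simp: fa_def w_def)
  have c: "continuous_on UNIV (\<lambda>a::nat\<Rightarrow>bool. fa a i)" for i
  proof -
    have "continuous_on UNIV ((\<lambda>b::bool. if b then w i else 0) \<circ> (\<lambda>a. a i))"
      by (intro continuous_on_compose continuous_on_product_coordinates) simp
    then show ?thesis by (simp add: fa_def o_def)
  qed
  show ?thesis
    by (rule uniform_limit_theorem[OF _ ul]) (auto intro!: always_eventually continuous_on_sum c)
qed

lemma compact_UNIV_fun: "compact (UNIV :: (nat \<Rightarrow> bool) set)"
proof -
  have "compact_space (product_topology (\<lambda>i::nat. (euclidean :: bool topology)) UNIV)"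
    by (subst compact_space_product_topology) (auto simp: compact_space_def intro: finite_imp_compact)
  then have "compactin euclidean (UNIV :: (nat \<Rightarrow> bool) set)"
    by (metis compact_space_def euclidean_product_topology topspace_euclidean)
  then show ?thesis by simp
qed



lemma Sm_eq: "(\<And>k. k < m \<Longrightarrow> a k = b k) \<Longrightarrow> Sm m a = Sm m b"
  unfolding Sm_def fa_def by (intro sum.cong) auto

lemma phi_gt:
  assumes "a j" "\<not> b j" "\<And>k. k < j \<Longrightarrow> a k = b k"
  shows "phi b < phi a"
proof -
  have e: "Sm j a = Sm j b" using Sm_eq assms(3) by blast
  have sa: "Sm (Suc j) a = Sm j a + w j" using assms(1) by (simp add: Sm_def fa_def)
  have sb: "Sm (Suc j) b = Sm j b" using assms(2) by (simp add: Sm_def fa_def)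
  have "Sm (Suc j) a \<le> phi a" using tail_bound[of a "Suc j"] by simp
  moreover have "phi b \<le> Sm (Suc j) b + (1/4)^Suc j / 3" using tail_bound[of b "Suc j"] by simp
  moreover have "w j = (1/4)^Suc j" by (simp add: w_def)
  moreover have "(0::real) < (1/4)^Suc j" by simp
  ultimately show ?thesis using e sa sb by linarith
qed

lemma inj_phi: "inj phi"
proof (rule injI, rule ccontr)
  fix a b assume eq: "phi a = phi b" and ne: "a \<noteq> b"
  then obtain k where "a k \<noteq> b k" by blast
  define j where "j = (LEAST k. a k \<noteq> b k)"
  have j1: "a j \<noteq> b j" unfolding j_def by (rule LeastI) fact
  have j2: "\<And>k. k < j \<Longrightarrow> a k = b k" unfolding j_def using not_less_Least by blast
  show False
  proof (cases "a j")
    case True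
    then show ?thesis using phi_gt[of a j b] j1 j2 eq by auto
  next
    case False
    then show ?thesis using phi_gt[of b j a] j1 j2 eq by auto
  qed
qed

definition Dx :: "(nat \<Rightarrow> bool) \<Rightarrow> (nat \<Rightarrow> bool) set" where
  "Dx x = {a. \<forall>k. a (2*k) = x k}"
definition Qx :: "(nat \<Rightarrow> bool) \<Rightarrow> real set" where "Qx x = phi ` Dx x"
definition PP :: "real set" where "PP = range phi"

lemma closed_Dx: "closed (Dx x)"
proof -
  have "Dx x = (\<Inter>k. {a. a (2*k) = x k})" by (auto simp: Dx_def)
  moreover have "closed {a::nat\<Rightarrow>bool. a (2*k) = x k}" for k
    by (intro closed_Collect_eq continuous_on_product_coordinates continuous_on_const)
  ultimately show ?thesis by auto
qed

lemma compact_Qx: "compact (Qx x)"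
  unfolding Qx_def
  by (intro compact_continuous_image continuous_on_subset[OF cont_phi]
        closed_Int_compact[OF closed_Dx compact_UNIV_fun, simplified]) auto

lemma compact_PP: "compact PP"
  unfolding PP_def by (intro compact_continuous_image cont_phi compact_UNIV_fun)

lemma Qx_sub: "Qx x \<subseteq> PP" by (auto simp: Qx_def PP_def)

lemma Qx_ne: "Qx x \<noteq> {}"
proof -
  have "(\<lambda>k. if even k then x (k div 2) else False) \<in> Dx x" by (auto simp: Dx_def)
  then show ?thesis by (auto simp: Qx_def)
qed

lemma Qx_disj: "x \<noteq> y \<Longrightarrow> Qx x \<inter> Qx y = {}"
proof -
  assume ne: "x \<noteq> y"
  { fix a b assume "\<forall>k. a (2*k) = x k" "\<forall>k. b (2*k) = y k" "phi a = phi b"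
    then have "a = b" using inj_phi by (auto simp: inj_def)
    then have False using ne \<open>\<forall>k. a (2*k) = x k\<close> \<open>\<forall>k. b (2*k) = y k\<close> by auto }
  then show ?thesis unfolding Qx_def Dx_def by blast
qed

lemma perfect_Qx: "perfect_set (Qx x)"
  unfolding perfect_set_def
proof (intro conjI ballI)
  show "closed (Qx x)" by (simp add: compact_Qx compact_imp_closed)
  fix y assume "y \<in> Qx x"
  then obtain a where a: "a \<in> Dx x" "y = phi a" by (auto simp: Qx_def)
  show "y islimpt Qx x"
    unfolding islimpt_approachable
  proof (intro allI impI)
    fix e :: real assume "0 < e"
    obtain n where n: "(1/4::real)^n < e" using real_arch_pow_inv[of e "1/4"] \<open>0 < e\<close> by auto
    define b where "b = a(2*n+1 := \<not> a (2*n+1))"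
    have bD: "b \<in> Dx x" using a(1) by (auto simp: Dx_def b_def) (metis even_Suc even_mult_iff odd_two_times_div_two_nat dvd_triv_left)+
    have "b \<noteq> a" by (auto simp: b_def fun_eq_iff)
    then have ne: "phi b \<noteq> phi a" using inj_phi by (auto simp: inj_def)
    have "Sm (2*n+1) b = Sm (2*n+1) a" by (intro Sm_eq) (auto simp: b_def)
    moreover note tail_bound[of a "2*n+1"] tail_bound[of b "2*n+1"]
    moreover have "(1/4::real)^(2*n+1) \<le> (1/4)^n" by (intro power_decreasing) auto
    ultimately have "dist (phi b) (phi a) < e" using n by (auto simp: dist_real_def abs_if)
    then show "\<exists>x'\<in>Qx x. x' \<noteq> y \<and> dist x' y < e" using bD ne a by (auto simp: Qx_def)
  qed
qed

lemma uncountable_fun: "uncountable (UNIV :: (nat \<Rightarrow> bool) set)"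
proof
  assume "countable (UNIV :: (nat \<Rightarrow> bool) set)"
  then have r: "range (from_nat_into (UNIV :: (nat \<Rightarrow> bool) set)) = UNIV"
    by (simp add: range_from_nat_into)
  define d where "d = (\<lambda>n. \<not> from_nat_into (UNIV :: (nat \<Rightarrow> bool) set) n n)"
  obtain n where "from_nat_into (UNIV :: (nat \<Rightarrow> bool) set) n = d" using r by (metis UNIV_I imageE)
  then show False unfolding d_def by (metis)
qed



definition Cm :: "nat \<Rightarrow> real set" where "Cm m = range (Sm m)"

lemma Cm_fin: "finite (Cm m) \<and> card (Cm m) \<le> 2^m"
proof -
  define g where "g = (\<lambda>b::nat\<Rightarrow>bool. \<Sum>k<m. if b k then w k else 0)"
  have "Cm m \<subseteq> g ` (PiE {..<m} (\<lambda>_. UNIV))"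
  proof
    fix y assume "y \<in> Cm m"
    then obtain a where y: "y = Sm m a" by (auto simp: Cm_def)
    have "y = g (restrict a {..<m})" unfolding y Sm_def g_def fa_def by (intro sum.cong) auto
    moreover have "restrict a {..<m} \<in> PiE {..<m} (\<lambda>_. UNIV)" by auto
    ultimately show "y \<in> g ` (PiE {..<m} (\<lambda>_. UNIV))" by blast
  qed
  moreover have "finite (PiE {..<m} (\<lambda>_. UNIV :: bool set))" by (intro finite_PiE) auto
  moreover have "card (PiE {..<m} (\<lambda>_. UNIV :: bool set)) = 2^m" by (simp add: card_PiE)
  ultimately show ?thesis
    by (metis card_image_le card_mono finite_imageI finite_subset order_trans)
qed

lemma PP_cover: "PP \<subseteq> (\<Union>c\<in>Cm m. {c + 0 .. c + (1/4)^m/3})"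
proof
  fix y assume "y \<in> PP"
  then obtain a where y: "y = phi a" by (auto simp: PP_def)
  have "Sm m a \<in> Cm m" by (auto simp: Cm_def)
  then show "y \<in> (\<Union>c\<in>Cm m. {c + 0 .. c + (1/4)^m/3})" using tail_bound[of a m] y by force
qed

lemma cover_measure:
  fixes C :: "real set"
  assumes "finite C" "card C \<le> K" "\<alpha> \<le> \<beta>"
  shows "emeasure lborel (\<Union>c\<in>C. {c + \<alpha> .. c + \<beta>}) \<le> ennreal (real K * (\<beta> - \<alpha>))"
proof -
  have "emeasure lborel (\<Union>c\<in>C. {c + \<alpha> .. c + \<beta>}) \<le> (\<Sum>c\<in>C. emeasure lborel {c + \<alpha> .. c + \<beta>})"
    using assms by (intro emeasure_subadditive_finite) auto
  also have "\<dots> = (\<Sum>c\<in>C. ennreal (\<beta> - \<alpha>))" using assms by simp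
  also have "\<dots> = ennreal (real (card C) * (\<beta> - \<alpha>))"
    using assms by (simp add: ennreal_of_nat_eq_real_of_nat ennreal_mult)
  also have "\<dots> \<le> ennreal (real K * (\<beta> - \<alpha>))"
    using assms by (intro ennreal_leI mult_right_mono) auto
  finally show ?thesis .
qed

lemma emeasure_zeroI:
  assumes "\<And>n. emeasure lborel X \<le> ennreal (c * (1/2)^n)"
  shows "emeasure lborel X = 0"
proof -
  have "emeasure lborel X \<le> 0 + ennreal e" if "0 < e" for e :: real
  proof -
    have pos: "0 < e / (\<bar>c\<bar> + 1)" using that by (intro divide_pos_pos) auto
    obtain n where n: "(1/2::real)^n < e / (\<bar>c\<bar> + 1)"
      using real_arch_pow_inv[OF pos, of "1/2"] by auto
    have "c * (1/2)^n \<le> (\<bar>c\<bar> + 1) * (1/2)^n" by (intro mult_right_mono) auto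
    also have "\<dots> \<le> e" using n by (simp add: field_simps)
    finally show ?thesis using assms[of n] by (metis add_0 ennreal_leI order_trans)
  qed
  then have "emeasure lborel X \<le> 0" by (rule ennreal_le_epsilon) blast
  then show ?thesis by simp
qed

lemma PP_null: "PP \<in> null_sets lborel"
proof -
  have m: "PP \<in> sets lborel" using compact_PP by (simp add: compact_imp_closed borel_closed)
  have "emeasure lborel PP \<le> ennreal (1 * (1/2)^n)" for n
  proof -
    have "emeasure lborel PP \<le> emeasure lborel (\<Union>c\<in>Cm n. {c + 0 .. c + (1/4)^n/3})"
      by (intro emeasure_mono PP_cover) (auto intro: sets.finite_UN Cm_fin[THEN conjunct1])
    also have "\<dots> \<le> ennreal (real (2^n) * ((1/4)^n/3 - 0))"
      using Cm_fin by (intro cover_measure) auto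
    also have "\<dots> \<le> ennreal (1 * (1/2)^n)"
    proof (intro ennreal_leI)
      have "real (2^n) * ((1/4::real)^n/3 - 0) = (1/2)^n / 3"
        by (simp add: power_mult_distrib[symmetric] flip: power_divide)
      then show "real (2^n) * ((1/4::real)^n/3 - 0) \<le> 1 * (1/2)^n" by simp
    qed
    finally show ?thesis .
  qed
  then have "emeasure lborel PP = 0" by (rule emeasure_zeroI)
  with m show ?thesis by (simp add: null_sets_def)
qed



definition qq :: "nat \<Rightarrow> real" where "qq = from_nat_into (\<rat> :: real set)"
definition rr :: "nat \<Rightarrow> nat \<Rightarrow> real" where "rr n k = (1/4)^(n+k)"
definition UU :: "nat \<Rightarrow> real set" where "UU n = (\<Union>k. ball (qq k) (rr n k))"
definition GG :: "real set" where "GG = (\<Inter>n. UU n)"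
definition VV :: "nat \<Rightarrow> nat \<Rightarrow> real set" where
  "VV n k = (\<Union>c\<in>Cm (n+k). {c + (- qq k - rr n k) .. c + (- qq k + rr n k + rr n k / 3)})"
definition NN :: "real set" where "NN = {p - g | p g. p \<in> PP \<and> g \<in> GG}"

lemma NN_sub: "NN \<subseteq> (\<Union>k. VV n k)"
proof
  fix y assume "y \<in> NN"
  then obtain p g where y: "y = p - g" "p \<in> PP" "g \<in> GG" by (auto simp: NN_def)
  then have "g \<in> UU n" by (auto simp: GG_def)
  then obtain k where k: "dist (qq k) g < rr n k" by (auto simp: UU_def)
  obtain c where c: "c \<in> Cm (n+k)" "c \<le> p" "p \<le> c + (1/4)^(n+k)/3"
    using PP_cover[of "n+k"] y(2) by auto
  have "y \<in> {c + (- qq k - rr n k) .. c + (- qq k + rr n k + rr n k / 3)}"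
    using c k y(1) by (auto simp: rr_def dist_real_def abs_if split: if_splits)
  then show "y \<in> (\<Union>k. VV n k)" using c(1) by (auto simp: VV_def)
qed

lemma VV_sets: "VV n k \<in> sets lborel"
  unfolding VV_def using Cm_fin by (intro sets.finite_UN) auto

lemma VV_measure: "emeasure lborel (VV n k) \<le> ennreal (7/3 * (1/2)^(n+k))"
proof -
  have "emeasure lborel (VV n k) \<le> ennreal (real (2^(n+k)) * ((- qq k + rr n k + rr n k / 3) - (- qq k - rr n k)))"
    unfolding VV_def using Cm_fin by (intro cover_measure) (auto simp: rr_def)
  also have "real (2^(n+k)) * ((- qq k + rr n k + rr n k / 3) - (- qq k - rr n k)) = 7/3 * (1/2)^(n+k)"
    by (simp add: rr_def power_mult_distrib[symmetric] field_simps flip: power_divide)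
  finally show ?thesis .
qed

lemma sum_half: "(\<Sum>k. 7/3 * (1/2::real)^(n+k)) = 14/3 * (1/2)^n"
  and summable_half: "summable (\<lambda>k. 7/3 * (1/2::real)^(n+k))"
proof -
  have e: "(\<lambda>k. 7/3 * (1/2::real)^(n+k)) = (\<lambda>k. (7/3 * (1/2)^n) * (1/2)^k)"
    by (simp add: power_add fun_eq_iff)
  show "summable (\<lambda>k. 7/3 * (1/2::real)^(n+k))" unfolding e
    by (intro summable_mult summable_geometric) simp
  show "(\<Sum>k. 7/3 * (1/2::real)^(n+k)) = 14/3 * (1/2)^n" unfolding e
    by (subst suminf_mult) (simp_all add: suminf_geometric)
qed

lemma NN_null: "NN \<in> null_sets lebesgue"
proof -
  define N' where "N' = (\<Inter>n. \<Union>k. VV n k)"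
  have m: "N' \<in> sets lborel" unfolding N'_def using VV_sets by auto
  have "emeasure lborel N' \<le> ennreal (5 * (1/2)^n)" for n
  proof -
    have "emeasure lborel N' \<le> emeasure lborel (\<Union>k. VV n k)"
      unfolding N'_def using VV_sets by (intro emeasure_mono) auto
    also have "\<dots> \<le> (\<Sum>k. emeasure lborel (VV n k))"
      using VV_sets by (intro emeasure_subadditive_countably) auto
    also have "\<dots> \<le> (\<Sum>k. ennreal (7/3 * (1/2)^(n+k)))"
      by (intro suminf_le VV_measure) auto
    also have "\<dots> = ennreal (\<Sum>k. 7/3 * (1/2)^(n+k))"
      by (rule suminf_ennreal2) (simp, rule summable_half)
    also have "\<dots> = ennreal (14/3 * (1/2)^n)"
      by (simp only: sum_half)
    also have "\<dots> \<le> ennreal (5 * (1/2)^n)" by (intro ennreal_leI) auto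
    finally show ?thesis .
  qed
  then have "emeasure lborel N' = 0" by (rule emeasure_zeroI)
  with m have "N' \<in> null_sets lborel" by (simp add: null_sets_def)
  then have "N' \<in> null_sets lebesgue" by (rule null_sets_completionI)
  moreover have "NN \<subseteq> N'" unfolding N'_def using NN_sub by blast
  ultimately show ?thesis using null_sets_completion_subset by blast
qed

lemma nowhere_dense_UU: "nowhere_dense (UNIV - UU n)"
proof -
  have "open (UU n)" by (auto simp: UU_def)
  then have cl: "closure (UNIV - UU n) = UNIV - UU n" by (simp add: closed_open closure_closed)
  have "interior (UNIV - UU n) = {}"
  proof (rule ccontr)
    assume "interior (UNIV - UU n) \<noteq> {}"
    then obtain x where "x \<in> interior (UNIV - UU n)" by blast
    then obtain e where e: "e > 0" "ball x e \<subseteq> UNIV - UU n" by (meson mem_interior)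
    obtain r where r: "r \<in> \<rat>" "x < r" "r < x + e" using Rats_dense_in_real[of x "x+e"] e by auto
    have "r \<in> range qq" unfolding qq_def using r(1)
      by (simp add: range_from_nat_into countable_rat[unfolded Rats_def] Rats_def) 
    then obtain k where k: "r = qq k" by auto
    have "r \<in> ball x e" using r by (auto simp: dist_real_def)
    moreover have "r \<in> UU n" unfolding UU_def k by (auto simp: rr_def intro!: exI[of _ k])
    ultimately show False using e by auto
  qed
  then show ?thesis by (simp add: nowhere_dense_def cl)
qed

lemma meager_notGG: "meager (UNIV - GG)"
  unfolding meager_def
  by (rule exI[of _ "range (\<lambda>n. UNIV - UU n)"]) (auto simp: nowhere_dense_UU GG_def)



lemma tr_eq: "(\<lambda>p. p - s) ` PP = {x. x - (- s) \<in> PP}" by force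

lemma tr_null_lborel: "(\<lambda>p. p - s) ` PP \<in> null_sets lborel"
  unfolding tr_eq by (rule null_sets_translation[OF PP_null])

lemma tr_null: "lebesgue_null ((\<lambda>p. p - s) ` PP)"
  unfolding lebesgue_null_def by (rule null_sets_completionI[OF tr_null_lborel])

lemma tr_nd: "nowhere_dense ((\<lambda>p. p - s) ` PP)"
proof -
  let ?T = "(\<lambda>p. p - s) ` PP"
  have cl: "closure ?T = ?T"
    by (simp add: closure_closed compact_imp_closed compact_translation_subtract compact_PP)
  have "interior ?T = {}"
  proof (rule ccontr)
    assume "interior ?T \<noteq> {}"
    then obtain x where "x \<in> interior ?T" by blast
    then obtain e where e: "e > 0" "ball x e \<subseteq> ?T" by (meson mem_interior)
    have "{x .. x + e/2} \<subseteq> ball x e" using e by (auto simp: dist_real_def)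
    with e have sub: "{x .. x + e/2} \<subseteq> ?T" by blast
    have "emeasure lborel {x .. x + e/2} \<le> emeasure lborel ?T"
      by (rule emeasure_mono[OF sub]) (rule null_setsD2[OF tr_null_lborel])
    also have "\<dots> = 0" using tr_null_lborel by auto
    finally show False using e by simp
  qed
  then show ?thesis by (simp add: nowhere_dense_def cl)
qed

lemma tr_meager: "meager ((\<lambda>p. p - s) ` PP)"
  unfolding meager_def by (rule exI[of _ "{(\<lambda>p. p - s) ` PP}"]) (auto simp: tr_nd)

theorem mainTheorem20:
  shows "\<not> (\<exists>L S. luzin_set L \<and> sierpinski_set S \<and> bernstein_set {l + s | l s. l \<in> L \<and> s \<in> S})"
proof
  assume "\<exists>L S. luzin_set L \<and> sierpinski_set S \<and> bernstein_set {l + s | l s. l \<in> L \<and> s \<in> S}"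
  then obtain L S where L: "luzin_set L" and S: "sierpinski_set S"
    and B: "bernstein_set {l + s | l s. l \<in> L \<and> s \<in> S}" by blast
  define B where "B = {l + s | l s. l \<in> L \<and> s \<in> S}"
  have cL: "countable (L \<inter> (UNIV - GG))" using L meager_notGG by (auto simp: luzin_set_def)
  have cS: "countable (S \<inter> NN)" using S NN_null by (auto simp: sierpinski_set_def lebesgue_null_def)
  have c1: "countable (S \<inter> (\<lambda>p. p - l) ` PP)" for l using S tr_null by (auto simp: sierpinski_set_def)
  have c2: "countable (L \<inter> (\<lambda>p. p - s) ` PP)" for s using L tr_meager by (auto simp: luzin_set_def)
  have sub: "B \<inter> PP \<subseteq> (\<Union>l\<in>L \<inter> (UNIV - GG). (\<lambda>s. l + s) ` (S \<inter> (\<lambda>p. p - l) ` PP))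
      \<union> (\<Union>s\<in>S \<inter> NN. (\<lambda>l. l + s) ` (L \<inter> (\<lambda>p. p - s) ` PP))"
  proof
    fix x assume "x \<in> B \<inter> PP"
    then obtain l s where x: "x = l + s" "l \<in> L" "s \<in> S" "x \<in> PP" by (auto simp: B_def)
    show "x \<in> (\<Union>l\<in>L \<inter> (UNIV - GG). (\<lambda>s. l + s) ` (S \<inter> (\<lambda>p. p - l) ` PP))
      \<union> (\<Union>s\<in>S \<inter> NN. (\<lambda>l. l + s) ` (L \<inter> (\<lambda>p. p - s) ` PP))"
    proof (cases "l \<in> GG")
      case False
      have "s \<in> (\<lambda>p. p - l) ` PP" using x by (auto intro!: image_eqI[of _ _ x])
      then show ?thesis using False x by blast
    next
      case True
      have "s \<in> NN" unfolding NN_def using x True by (intro CollectI exI[of _ x] exI[of _ l]) auto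
      moreover have "l \<in> (\<lambda>p. p - s) ` PP" using x by (auto intro!: image_eqI[of _ _ x])
      ultimately show ?thesis using x by blast
    qed
  qed
  have cBP: "countable (B \<inter> PP)"
  proof (rule countable_subset[OF sub], rule countable_Un)
    show "countable (\<Union>l\<in>L \<inter> (UNIV - GG). (\<lambda>s. l + s) ` (S \<inter> (\<lambda>p. p - l) ` PP))"
      by (rule countable_UN[OF cL]) (rule countable_image[OF c1])
    show "countable (\<Union>s\<in>S \<inter> NN. (\<lambda>l. l + s) ` (L \<inter> (\<lambda>p. p - s) ` PP))"
      by (rule countable_UN[OF cS]) (rule countable_image[OF c2])
  qed
  have ne: "B \<inter> Qx x \<noteq> {}" for x
  proof -
    have "bernstein_set B" using B by (simp add: B_def)
    then have "B \<inter> Qx x \<noteq> {} \<and> (UNIV - B) \<inter> Qx x \<noteq> {}"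
      unfolding bernstein_set_def using Qx_ne perfect_Qx by blast
    then show ?thesis by blast
  qed
  define c where "c x = (SOME y. y \<in> B \<inter> Qx x)" for x
  have c: "c x \<in> B \<inter> Qx x" for x unfolding c_def using ne[of x] by (metis some_in_eq)
  have "inj c"
  proof (rule injI, rule ccontr)
    fix x y assume "c x = c y" "x \<noteq> y"
    then show False using c[of x] c[of y] Qx_disj[of x y] by auto
  qed
  moreover have "range c \<subseteq> B \<inter> PP" using c Qx_sub by blast
  then have "countable (range c)" using cBP countable_subset by blast
  ultimately have "countable (UNIV :: (nat \<Rightarrow> bool) set)"
    using countable_image_inj_on by blast
  then show False using uncountable_fun by blast
qed

end
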